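(* Let $d \ge 1$, $p \in [0,1/2)$, $\mathbf{x} \in \mathbb{R}^d$, $G > 0$, $\lambda > 0$. Let measurements $y_k = \langle \mathbf{x}, \mathbf{a}_k\rangle + \epsilon_k$ ($k = 0,1,\dots$) be given, where $\epsilon_k = \xi_k\nu_k$ with $\xi_k$ an indicator equal to $1$ with probability $p$, independent of all other variables, and $\nu_k$ arbitrary (possibly dependent on $\mathbf{x}$ and the measurement vectors). Let $\mathcal{F}_k$ be the $\sigma$-algebra generated by $\{\mathbf{a}_0,\epsilon_0\},\dots,\{\mathbf{a}_{k-1},\epsilon_{k-1}\}$, and assume each $\mathbf{a}_k \in \mathbb{R}^d$ has unit norm and is independent of $\mathcal{F}_k$, the vectors $\sqrt d\,\mathbf{a}_k$ are i.i.d. mean-zero isotropic, and for every $\mathcal{F}_k$-measurable $\mathbf{u}$, $\mathbb{E}_{\mathbf{a}_k}[|\langle \mathbf{u},\mathbf{a}_k\rangle| \mid \mathbf{u}] \ge \widetilde{C}\|\mathbf{u}\|_2/\sqrt d$ for a constant $\widetilde C > 0$. Let $\mathbf{x}_0 = 0$, $\mathbf{x}_{k+1} = \mathbf{x}_k + G\lambda^{-k}\mathrm{sign}(y_k - \langle \mathbf{x}_k,\mathbf{a}_k\rangle)\mathbf{a}_k$, $\mathbf{u}_k := \lambda^k(\mathbf{x} - \mathbf{x}_k)/G$ and $Y_k := \|\mathbf{u}_k\|_2^2$, so that $$Y_{k+1} = \lambda^2\Big\{\|\mathbf{u}_k\|^2 - 2\langle \mathbf{u}_k,\mathbf{a}_k\rangle\,\mathrm{sign}\big(\langle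 \mathbf{u}_k,\mathbf{a}_k\rangle + \lambda^k\epsilon_k/G\big) + 1\Big\}.$$ Suppose $$1 < \lambda^2 \le 1 + \widetilde{C}^2\frac{(1-2p)^2}{9d} < \frac{50}{49},$$ and set $a = \frac{1}{2(\lambda^2-1)}$, $\eta = c^*\sqrt{\lambda^2-1}$ with $$c^* = \frac{1}{8\lambda^2}\Big[\frac{\sqrt2\,\lambda^2(1-2p)\widetilde C}{\sqrt d} - \sqrt{\lambda^2-1}\Big(\frac32 + \lambda^2\Big)\Big].$$ Then $$\mathbb{E}\big[e^{\eta(Y_{k+1} - a)}\mathbb{1}_{\{Y_k \le a\}} \mid \mathcal{F}_k\big] \le \exp\Big\{\frac{\widetilde C(1-2p)}{3\sqrt d}\Big\}.$$
   Context: $\mathrm{sign}$ is the sign function. *)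

theory Defs
  imports "HOL-Probability.Probability"
begin

definition gen_sets :: "'a measure \<Rightarrow> ('a \<Rightarrow> 'b::topological_space) \<Rightarrow> 'a set set" where
  "gen_sets M X = {X -` B \<inter> space M | B. B \<in> sets borel}"

definition noise :: "(nat \<Rightarrow> 'a \<Rightarrow> real) \<Rightarrow> (nat \<Rightarrow> 'a \<Rightarrow> real) \<Rightarrow> nat \<Rightarrow> 'a \<Rightarrow> real" where
  "noise \<xi> \<nu> k \<omega> = \<xi> k \<omega> * \<nu> k \<omega>"

definition filt :: "'a measure \<Rightarrow> (nat \<Rightarrow> 'a \<Rightarrow> real^'d) \<Rightarrow> (nat \<Rightarrow> 'a \<Rightarrow> real)
    \<Rightarrow> (nat \<Rightarrow> 'a \<Rightarrow> real) \<Rightarrow> nat \<Rightarrow> 'a measure" where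
  "filt M A \<xi> \<nu> k = sigma (space M) (\<Union>j<k. gen_sets M (A j) \<union> gen_sets M (noise \<xi> \<nu> j))"

definition meas :: "real^'d \<Rightarrow> (nat \<Rightarrow> 'a \<Rightarrow> real^'d) \<Rightarrow> (nat \<Rightarrow> 'a \<Rightarrow> real)
    \<Rightarrow> (nat \<Rightarrow> 'a \<Rightarrow> real) \<Rightarrow> nat \<Rightarrow> 'a \<Rightarrow> real" where
  "meas x A \<xi> \<nu> k \<omega> = x \<bullet> A k \<omega> + noise \<xi> \<nu> k \<omega>"

primrec xseq :: "real^'d \<Rightarrow> (nat \<Rightarrow> 'a \<Rightarrow> real^'d) \<Rightarrow> (nat \<Rightarrow> 'a \<Rightarrow> real)
    \<Rightarrow> (nat \<Rightarrow> 'a \<Rightarrow> real) \<Rightarrow> real \<Rightarrow> real \<Rightarrow> nat \<Rightarrow> 'a \<Rightarrow> real^'d" where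
  "xseq x A \<xi> \<nu> G lam 0 \<omega> = 0"
| "xseq x A \<xi> \<nu> G lam (Suc k) \<omega> =
     xseq x A \<xi> \<nu> G lam k \<omega> +
     (G * inverse (lam ^ k) * sgn (meas x A \<xi> \<nu> k \<omega> - xseq x A \<xi> \<nu> G lam k \<omega> \<bullet> A k \<omega>)) *\<^sub>R A k \<omega>"

definition useq :: "real^'d \<Rightarrow> (nat \<Rightarrow> 'a \<Rightarrow> real^'d) \<Rightarrow> (nat \<Rightarrow> 'a \<Rightarrow> real)
    \<Rightarrow> (nat \<Rightarrow> 'a \<Rightarrow> real) \<Rightarrow> real \<Rightarrow> real \<Rightarrow> nat \<Rightarrow> 'a \<Rightarrow> real^'d" where
  "useq x A \<xi> \<nu> G lam k \<omega> = (lam ^ k / G) *\<^sub>R (x - xseq x A \<xi> \<nu> G lam k \<omega>)"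

definition Yseq :: "real^'d \<Rightarrow> (nat \<Rightarrow> 'a \<Rightarrow> real^'d) \<Rightarrow> (nat \<Rightarrow> 'a \<Rightarrow> real)
    \<Rightarrow> (nat \<Rightarrow> 'a \<Rightarrow> real) \<Rightarrow> real \<Rightarrow> real \<Rightarrow> nat \<Rightarrow> 'a \<Rightarrow> real" where
  "Yseq x A \<xi> \<nu> G lam k \<omega> = (norm (useq x A \<xi> \<nu> G lam k \<omega>))\<^sup>2"

definition cstar :: "real \<Rightarrow> real \<Rightarrow> real \<Rightarrow> real \<Rightarrow> real" where
  "cstar lam p C d = 1 / (8 * lam\<^sup>2) *
     (sqrt 2 * lam\<^sup>2 * (1 - 2 * p) * C / sqrt d - sqrt (lam\<^sup>2 - 1) * (3 / 2 + lam\<^sup>2))"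

end

theory Submission
  imports Defs
begin

lemma arith_key:
  fixes L q s :: real
  assumes L1: "1 < L" and L2: "L < 50/49" and q0: "0 < q" and q1: "q < 3/7"
    and s0: "0 < s" and sq: "s * s = L - 1" and sle: "s \<le> q / 3"
  shows "0 \<le> (sqrt 2 * L * q - s * (3/2 + L)) / (8 * L)"
    and "(sqrt 2 * L * q - s * (3/2 + L)) / (8 * L) * s * (1/2 + L)
          + sqrt 2 * L * ((sqrt 2 * L * q - s * (3/2 + L)) / (8 * L)) \<le> q / 3"
proof -
  have r2a: "7/5 \<le> sqrt 2" by (rule real_le_rsqrt) (simp add: power2_eq_square)
  have r2b: "sqrt 2 \<le> 17/12" by (rule real_le_lsqrt) (simp_all add: power2_eq_square)
  have "7/5 * L \<le> sqrt 2 * L" using r2a L1 by (intro mult_right_mono) auto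
  moreover have "(3/2 + L) / 3 \<le> 7/5 * L" using L1 by (simp add: field_simps)
  ultimately have h1: "(3/2 + L) / 3 \<le> sqrt 2 * L" by (rule order_trans[rotated])
  have h2: "s * (3/2 + L) \<le> q/3 * (3/2 + L)" using sle L1 by (intro mult_right_mono) auto
  have h3: "q/3 * (3/2 + L) = q * ((3/2 + L) / 3)" by simp
  have h4: "q * ((3/2 + L) / 3) \<le> q * (sqrt 2 * L)" using h1 q0 by (intro mult_left_mono) auto
  have num0: "0 \<le> sqrt 2 * L * q - s * (3/2 + L)" using h2 h3 h4 by (simp add: algebra_simps)
  show c0: "0 \<le> (sqrt 2 * L * q - s * (3/2 + L)) / (8 * L)"
    using num0 L1 by simp
  define c where "c = (sqrt 2 * L * q - s * (3/2 + L)) / (8 * L)"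
  have "c \<le> (sqrt 2 * L * q) / (8 * L)" unfolding c_def
    using s0 L1 by (intro divide_right_mono) auto
  also have "(sqrt 2 * L * q) / (8 * L) = sqrt 2 * q / 8" using L1 by simp
  finally have cle: "c \<le> sqrt 2 * q / 8" .
  have c0': "0 \<le> c" using c0 c_def by simp
  have "c * s * (1/2 + L) + sqrt 2 * L * c = c * (s * (1/2 + L) + sqrt 2 * L)" by (simp add: algebra_simps)
  also have "\<dots> \<le> (sqrt 2 * q / 8) * (q/3 * (1/2 + L) + sqrt 2 * L)"
  proof (rule mult_mono[OF cle])
    show "s * (1/2 + L) + sqrt 2 * L \<le> q/3 * (1/2 + L) + sqrt 2 * L"
      using sle L1 by (simp add: mult_right_mono)
  qed (use c0' s0 L1 q0 in auto)
  also have "\<dots> \<le> q / 3"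
  proof -
    have a1: "q/3 * (1/2 + L) \<le> 1/7 * (1/2 + 50/49)"
      using q1 L2 L1 q0 by (intro mult_mono) auto
    have a2: "sqrt 2 * L \<le> 17/12 * (50/49)"
      using r2b L2 L1 by (intro mult_mono) auto
    have h: "q/3 * (1/2 + L) + sqrt 2 * L \<le> 5/3" using a1 a2 by simp
    have "(sqrt 2 * q / 8) * (q/3 * (1/2 + L) + sqrt 2 * L) \<le> (17/12 * q / 8) * (5/3)"
      using r2b q0 h L1 by (intro mult_mono) auto
    moreover have "(17/12 * q / 8) * (5/3) \<le> q / 3" using q0 by simp
    ultimately show ?thesis by (rule order_trans)
  qed
  finally show "(sqrt 2 * L * q - s * (3/2 + L)) / (8 * L) * s * (1/2 + L)
          + sqrt 2 * L * ((sqrt 2 * L * q - s * (3/2 + L)) / (8 * L)) \<le> q / 3"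
    unfolding c_def .
qed

lemma cstar_alt: "cstar lam p C d = (sqrt 2 * (lam\<^sup>2) * ((1 - 2 * p) * C / sqrt d) - sqrt (lam\<^sup>2 - 1) * (3/2 + lam\<^sup>2)) / (8 * lam\<^sup>2)"
  unfolding cstar_def by (simp add: divide_simps)

lemma xseq_meas:
  assumes [measurable]: "\<And>j. A j \<in> borel_measurable M" "\<And>j. \<xi> j \<in> borel_measurable M"
    "\<And>j. \<nu> j \<in> borel_measurable M"
  shows "(\<lambda>\<omega>. xseq x A \<xi> \<nu> G lam k \<omega>) \<in> borel_measurable M"
proof (induction k)
  case 0 then show ?case by simp
next
  case (Suc k)
  note [measurable] = Suc
  show ?case unfolding xseq.simps meas_def noise_def by measurable
qed

lemma useq_step:
  assumes G: "G > 0" and lam: "lam > 0"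
  shows "useq x A \<xi> \<nu> G lam (Suc k) \<omega> = lam *\<^sub>R useq x A \<xi> \<nu> G lam k \<omega>
     - (lam * sgn (meas x A \<xi> \<nu> k \<omega> - xseq x A \<xi> \<nu> G lam k \<omega> \<bullet> A k \<omega>)) *\<^sub>R A k \<omega>"
proof -
  define sg where "sg = sgn (meas x A \<xi> \<nu> k \<omega> - xseq x A \<xi> \<nu> G lam k \<omega> \<bullet> A k \<omega>)"
  define xk where "xk = xseq x A \<xi> \<nu> G lam k \<omega>"
  have e: "lam ^ Suc k / G * (G * inverse (lam ^ k) * sg) = lam * sg"
    using G lam by (simp add: field_simps)
  have "useq x A \<xi> \<nu> G lam (Suc k) \<omega> = (lam ^ Suc k / G) *\<^sub>R (x - xk) - (lam ^ Suc k / G * (G * inverse (lam ^ k) * sg)) *\<^sub>R A k \<omega>"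
    unfolding useq_def xseq.simps sg_def xk_def by (simp add: algebra_simps)
  also have "\<dots> = lam *\<^sub>R useq x A \<xi> \<nu> G lam k \<omega> - (lam * sg) *\<^sub>R A k \<omega>"
    unfolding e useq_def xk_def by (simp add: algebra_simps)
  finally show ?thesis unfolding sg_def .
qed

theorem lemma4p2:
  fixes M :: "'a measure"
    and x :: "real^'d"
    and A :: "nat \<Rightarrow> 'a \<Rightarrow> real^'d"
    and \<xi> \<nu> :: "nat \<Rightarrow> 'a \<Rightarrow> real"
    and p G lam C :: real
    and k :: nat
  defines "d \<equiv> real CARD('d)"
  assumes M: "prob_space M"
    and p: "0 \<le> p" "p < 1/2"
    and G: "G > 0" and lam: "lam > 0"
    and C: "C > 0"
    and \<xi>_meas: "\<And>j. \<xi> j \<in> borel_measurable M"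
    and \<xi>_vals: "\<And>j \<omega>. \<omega> \<in> space M \<Longrightarrow> \<xi> j \<omega> \<in> {0, 1}"
    and \<xi>_prob: "\<And>j. measure M {\<omega> \<in> space M. \<xi> j \<omega> = 1} = p"
    and \<xi>_indep: "prob_space.indep_sets M
        (\<lambda>i. case i of
            None \<Rightarrow> sigma_sets (space M) (\<Union>j. gen_sets M (A j) \<union> gen_sets M (\<nu> j))
          | Some j \<Rightarrow> sigma_sets (space M) (gen_sets M (\<xi> j))) UNIV"
    and \<nu>_meas: "\<And>j. \<nu> j \<in> borel_measurable M"
    and A_meas: "\<And>j. A j \<in> borel_measurable M"
    and A_unit: "\<And>j \<omega>. \<omega> \<in> space M \<Longrightarrow> norm (A j \<omega>) = 1"
    and A_indep_F: "\<And>j. prob_space.indep_set M (sigma_sets (space M) (gen_sets M (A j)))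
                          (sets (filt M A \<xi> \<nu> j))"
    and A_iid_indep: "prob_space.indep_vars M (\<lambda>_. borel) (\<lambda>j \<omega>. sqrt d *\<^sub>R A j \<omega>) UNIV"
    and A_iid_distr: "\<And>j. distr M borel (\<lambda>\<omega>. sqrt d *\<^sub>R A j \<omega>) = distr M borel (\<lambda>\<omega>. sqrt d *\<^sub>R A 0 \<omega>)"
    and A_mean0: "\<And>j i. integral\<^sup>L M (\<lambda>\<omega>. sqrt d * (A j \<omega> $ i)) = 0"
    and A_isotropic: "\<And>j i i'. integral\<^sup>L M (\<lambda>\<omega>. (sqrt d * (A j \<omega> $ i)) * (sqrt d * (A j \<omega> $ i')))
                              = (if i = i' then 1 else 0)"
    and A_smallball: "\<And>j u. u \<in> borel_measurable (filt M A \<xi> \<nu> j) \<Longrightarrow>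
        AE \<omega> in M. (\<integral>v. \<bar>u \<omega> \<bullet> v\<bar> \<partial>(distr M borel (A j))) \<ge> C * norm (u \<omega>) / sqrt d"
    and lam_bounds: "1 < lam\<^sup>2" "lam\<^sup>2 \<le> 1 + C\<^sup>2 * (1 - 2 * p)\<^sup>2 / (9 * d)"
                    "1 + C\<^sup>2 * (1 - 2 * p)\<^sup>2 / (9 * d) < 50 / 49"
  shows "AE \<omega> in M.
     real_cond_exp M (filt M A \<xi> \<nu> k)
       (\<lambda>\<omega>'. exp (cstar lam p C d * sqrt (lam\<^sup>2 - 1) *
                   (Yseq x A \<xi> \<nu> G lam (Suc k) \<omega>' - 1 / (2 * (lam\<^sup>2 - 1))))
             * indicator {\<omega>'' \<in> space M. Yseq x A \<xi> \<nu> G lam k \<omega>'' \<le> 1 / (2 * (lam\<^sup>2 - 1))} \<omega>') \<omega>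
     \<le> exp (C * (1 - 2 * p) / (3 * sqrt d))"
proof -
  interpret prob_space M by (rule M)
  have d0: "d > 0" unfolding d_def by simp
  define L where "L = lam\<^sup>2"
  define q where "q = (1 - 2 * p) * C / sqrt d"
  define s where "s = sqrt (L - 1)"
  define aa where "aa = 1 / (2 * (L - 1))"
  define c where "c = (sqrt 2 * L * q - s * (3/2 + L)) / (8 * L)"
  have L1: "1 < L" using lam_bounds L_def by simp
  have q0: "q > 0" unfolding q_def using p C d0 by simp
  have qq: "C\<^sup>2 * (1 - 2 * p)\<^sup>2 / (9 * d) = (q/3)\<^sup>2"
    unfolding q_def using d0 by (simp add: field_simps power2_eq_square)
  have q1: "q < 3/7"
  proof -
    have h: "(q/3)\<^sup>2 * 49 < 1" using lam_bounds(3) qq by simp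
    show ?thesis
    proof (rule ccontr)
      assume "\<not> q < 3/7"
      hence "q/3 \<ge> 1/7" by simp
      hence "(1/7)\<^sup>2 \<le> (q/3)\<^sup>2" by (rule power_mono) simp
      thus False using h by (simp add: power2_eq_square)
    qed
  qed
  have L2: "L < 50/49" using lam_bounds L_def by simp
  have s0: "s > 0" unfolding s_def using L1 by simp
  have ss: "s * s = L - 1" unfolding s_def using L1 by simp
  have sle: "s \<le> q/3"
  proof -
    have "L - 1 \<le> (q/3)\<^sup>2" using lam_bounds(2) qq L_def by simp
    hence "s \<le> sqrt ((q/3)\<^sup>2)" unfolding s_def by (rule real_sqrt_le_mono)
    thus ?thesis using q0 by simp
  qed
  note ak = arith_key[OF L1 L2 q0 q1 s0 ss sle]
  have cs: "cstar lam p C d = c"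
    unfolding cstar_alt c_def q_def s_def L_def by (rule refl)
  have c0: "0 \<le> c" using ak(1) c_def by simp
  have eta0: "0 \<le> c * s" using c0 s0 by simp
  have aa0: "aa > 0" unfolding aa_def using L1 by simp
  have saa: "s * sqrt aa = 1 / sqrt 2"
  proof -
    have "s * sqrt aa = sqrt ((L - 1) * aa)" unfolding s_def by (simp add: real_sqrt_mult)
    also have "(L - 1) * aa = 1 / 2" unfolding aa_def using L1 by simp
    finally show ?thesis by (simp add: real_sqrt_divide)
  qed
  have bound_eq: "c * s * (L * (sqrt aa + 1)\<^sup>2 - aa) = c * s * (1/2 + L) + sqrt 2 * L * c"
  proof -
    have "L * (sqrt aa + 1)\<^sup>2 - aa = (L - 1) * aa + 2 * L * sqrt aa + L"
      using aa0 by (simp add: power2_eq_square algebra_simps)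
    also have "(L - 1) * aa = 1/2" unfolding aa_def using L1 by simp
    finally have "c * s * (L * (sqrt aa + 1)\<^sup>2 - aa) = c * s * (1/2 + L) + 2 * L * c * (s * sqrt aa)"
      by (simp add: algebra_simps)
    also have "2 * L * c * (s * sqrt aa) = sqrt 2 * L * c" unfolding saa
      by (simp add: field_simps)
    finally show ?thesis .
  qed
  define B where "B = exp (C * (1 - 2 * p) / (3 * sqrt d))"
  define F where "F = filt M A \<xi> \<nu> k"
  define f where "f = (\<lambda>\<omega>'. exp (cstar lam p C d * sqrt (lam\<^sup>2 - 1) *
                   (Yseq x A \<xi> \<nu> G lam (Suc k) \<omega>' - 1 / (2 * (lam\<^sup>2 - 1))))
             * indicator {\<omega>'' \<in> space M. Yseq x A \<xi> \<nu> G lam k \<omega>'' \<le> 1 / (2 * (lam\<^sup>2 - 1))} \<omega>')"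
  have f_le: "0 \<le> f \<omega> \<and> f \<omega> \<le> B" if w: "\<omega> \<in> space M" for \<omega>
  proof -
  have fw: "f \<omega> = (if Yseq x A \<xi> \<nu> G lam k \<omega> \<le> aa then exp (c * s * (Yseq x A \<xi> \<nu> G lam (Suc k) \<omega> - aa)) else 0)"
    using w unfolding f_def cs aa_def s_def L_def indicator_def by simp
  show ?thesis
  proof (cases "Yseq x A \<xi> \<nu> G lam k \<omega> \<le> aa")
    case False
    then show ?thesis unfolding fw B_def by simp
  next
    case True
    define u where "u = useq x A \<xi> \<nu> G lam k \<omega>"
    define sg where "sg = sgn (meas x A \<xi> \<nu> k \<omega> - xseq x A \<xi> \<nu> G lam k \<omega> \<bullet> A k \<omega>)"
    have nu: "norm u \<le> sqrt aa"
      by (rule real_le_rsqrt) (use True in \<open>simp add: u_def Yseq_def\<close>)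
    have "norm (useq x A \<xi> \<nu> G lam (Suc k) \<omega>) \<le> norm (lam *\<^sub>R u) + norm ((lam * sg) *\<^sub>R A k \<omega>)"
      unfolding useq_step[OF G lam] u_def sg_def by (rule norm_triangle_ineq4)
    also have "\<dots> \<le> lam * norm u + lam * 1"
    proof -
      have "\<bar>sg\<bar> \<le> 1" unfolding sg_def by (simp add: sgn_real_def)
      then have "\<bar>lam * sg\<bar> \<le> lam * 1" using lam by (simp add: abs_mult)
      then show ?thesis using lam A_unit[OF w] by simp
    qed
    also have "\<dots> \<le> lam * (sqrt aa + 1)" using nu lam by (simp add: algebra_simps)
    finally have nb: "norm (useq x A \<xi> \<nu> G lam (Suc k) \<omega>) \<le> lam * (sqrt aa + 1)" .
    have Yb: "Yseq x A \<xi> \<nu> G lam (Suc k) \<omega> \<le> L * (sqrt aa + 1)\<^sup>2"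
      unfolding Yseq_def L_def using power_mono[OF nb, of 2] by (simp add: power_mult_distrib)
    have "c * s * (Yseq x A \<xi> \<nu> G lam (Suc k) \<omega> - aa) \<le> c * s * (L * (sqrt aa + 1)\<^sup>2 - aa)"
      using Yb eta0 by (intro mult_left_mono) auto
    also have "\<dots> \<le> q / 3" using bound_eq ak(2)[folded c_def] by linarith
    also have "q / 3 = C * (1 - 2 * p) / (3 * sqrt d)" unfolding q_def by (simp add: mult.commute)
    finally have "c * s * (Yseq x A \<xi> \<nu> G lam (Suc k) \<omega> - aa) \<le> C * (1 - 2 * p) / (3 * sqrt d)" .
    then show ?thesis using True unfolding fw B_def by simp
  qed
  qed
  have gsub: "(\<Union>j<k. gen_sets M (A j) \<union> gen_sets M (noise \<xi> \<nu> j)) \<subseteq> sets M"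
  proof -
    have "noise \<xi> \<nu> j \<in> borel_measurable M" for j
      unfolding noise_def[abs_def] using \<xi>_meas \<nu>_meas by measurable
    then show ?thesis using A_meas unfolding gen_sets_def by (auto intro: measurable_sets)
  qed
  have gsub': "(\<Union>j<k. gen_sets M (A j) \<union> gen_sets M (noise \<xi> \<nu> j)) \<subseteq> Pow (space M)"
    unfolding gen_sets_def by auto
  have sub: "subalgebra M F"
    unfolding subalgebra_def F_def filt_def using gsub gsub'
    by (simp add: sets.sigma_sets_subset)
  interpret finite_measure_subalgebra M F by unfold_locales (rule sub)
  have Ymeas: "(\<lambda>\<omega>. Yseq x A \<xi> \<nu> G lam j \<omega>) \<in> borel_measurable M" for j
  proof -
    note [measurable] = xseq_meas[OF A_meas \<xi>_meas \<nu>_meas]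
    show ?thesis unfolding Yseq_def useq_def by measurable
  qed
  have fmeas: "f \<in> borel_measurable M"
  proof -
    note [measurable] = Ymeas
    show ?thesis unfolding f_def by measurable
  qed
  have fint: "integrable M f"
    by (rule integrable_const_bound[where B=B]) (use f_le fmeas in auto)
  have "AE \<omega> in M. real_cond_exp M F f \<omega> \<le> B"
    by (rule real_cond_exp_le_c[OF fint]) (use f_le in auto)
  then show ?thesis unfolding F_def f_def B_def .
qed

end
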